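(* Let $A$ be a non-zero Abelian group which is either a torsion group or a non-reduced group. If the endomorphism ring $\mathrm{End}\,A$ is centrally essential, then $\mathrm{End}\,A$ is commutative.
   Context: All rings are associative with non-zero identity. A ring $R$ is centrally essential if for every non-zero $a\in R$ there exist non-zero elements $x,y$ of the center of $R$ with $ax=y$. An Abelian group is reduced if it has no non-zero divisible subgroup, and non-reduced otherwise. *)

theory Defs
  imports "HOL-Algebra.Ring"
begin

definition nsmul :: "nat \<Rightarrow> 'a::ab_group_add \<Rightarrow> 'a" where
  "nsmul n x = (((+) x) ^^ n) 0"

definition torsion_group :: "'a::ab_group_add itself \<Rightarrow> bool" where
  "torsion_group _ \<longleftrightarrow> (\<forall>x::'a. \<exists>n>0. nsmul n x = 0)"

definition subgroup_add :: "'a::ab_group_add set \<Rightarrow> bool" where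
  "subgroup_add D \<longleftrightarrow> 0 \<in> D \<and> (\<forall>x\<in>D. \<forall>y\<in>D. x + y \<in> D) \<and> (\<forall>x\<in>D. - x \<in> D)"

definition divisible_subgroup :: "'a::ab_group_add set \<Rightarrow> bool" where
  "divisible_subgroup D \<longleftrightarrow> subgroup_add D \<and> (\<forall>d\<in>D. \<forall>n>0. \<exists>e\<in>D. nsmul n e = d)"

definition reduced_group :: "'a::ab_group_add itself \<Rightarrow> bool" where
  "reduced_group _ \<longleftrightarrow> (\<forall>D::'a set. divisible_subgroup D \<longrightarrow> D = {0})"

definition endos :: "('a::ab_group_add \<Rightarrow> 'a) set" where
  "endos = {f. \<forall>x y. f (x + y) = f x + f y}"

definition End_ring :: "'a::ab_group_add itself \<Rightarrow> ('a \<Rightarrow> 'a) ring" where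
  "End_ring _ = \<lparr>carrier = endos, monoid.mult = (\<circ>), one = id,
                 zero = (\<lambda>_. 0), add = (\<lambda>f g x. f x + g x)\<rparr>"

definition ring_center :: "('r, 'm) ring_scheme \<Rightarrow> 'r set" where
  "ring_center R = {z \<in> carrier R. \<forall>a\<in>carrier R. z \<otimes>\<^bsub>R\<^esub> a = a \<otimes>\<^bsub>R\<^esub> z}"

definition centrally_essential :: "('r, 'm) ring_scheme \<Rightarrow> bool" where
  "centrally_essential R \<longleftrightarrow>
     (\<forall>a\<in>carrier R. a \<noteq> \<zero>\<^bsub>R\<^esub> \<longrightarrow>
        (\<exists>x\<in>ring_center R. \<exists>y\<in>ring_center R.
           x \<noteq> \<zero>\<^bsub>R\<^esub> \<and> y \<noteq> \<zero>\<^bsub>R\<^esub> \<and> a \<otimes>\<^bsub>R\<^esub> x = y))"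

definition ring_commutative :: "('r, 'm) ring_scheme \<Rightarrow> bool" where
  "ring_commutative R \<longleftrightarrow> (\<forall>a\<in>carrier R. \<forall>b\<in>carrier R. a \<otimes>\<^bsub>R\<^esub> b = b \<otimes>\<^bsub>R\<^esub> a)"

end

theory Submission
  imports Defs "HOL-Computational_Algebra.Primes"
begin

lemma nsmul_0[simp]: "nsmul 0 x = 0" by (simp add: nsmul_def)
lemma nsmul_Suc: "nsmul (Suc n) x = x + nsmul n x" by (simp add: nsmul_def)
lemma nsmul_add: "nsmul (m + n) x = nsmul m x + nsmul n x"
  by (induction m) (simp_all add: nsmul_Suc add.assoc)
lemma nsmul_plus: "nsmul n (x + y) = nsmul n x + nsmul n y"
  by (induction n) (simp_all add: nsmul_Suc algebra_simps)
lemma nsmul_neg: "nsmul n (- x) = - nsmul n x"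
  by (induction n) (simp_all add: nsmul_Suc algebra_simps)
lemma nsmul_mult: "nsmul (m * n) x = nsmul m (nsmul n x)"
  by (induction m) (simp_all add: nsmul_Suc nsmul_add)
lemma nsmul_zero[simp]: "nsmul n (0::'a::ab_group_add) = 0"
  by (induction n) (simp_all add: nsmul_Suc)

lemma endos_add: "f \<in> endos \<Longrightarrow> f (x + y) = f x + f y" by (simp add: endos_def)
lemma endos_0: "f \<in> endos \<Longrightarrow> f 0 = 0"
  using endos_add[of f 0 0] by simp
lemma endos_neg: "f \<in> endos \<Longrightarrow> f (- x) = - f x"
  using endos_add[of f x "-x"] endos_0[of f] by (simp add: add.inverse_unique)
lemma endos_diff: "f \<in> endos \<Longrightarrow> f (x - y) = f x - f y"
  using endos_add[of f x "-y"] endos_neg[of f y] by simp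
lemma endos_nsmul: "f \<in> endos \<Longrightarrow> f (nsmul n x) = nsmul n (f x)"
  by (induction n) (simp_all add: nsmul_Suc endos_0 endos_add)

definition zsmul :: "int \<Rightarrow> 'a::ab_group_add \<Rightarrow> 'a" where
  "zsmul k x = (if 0 \<le> k then nsmul (nat k) x else - nsmul (nat (-k)) x)"

lemma zsmul_diff_nat: "zsmul (int a - int b) x = nsmul a x - nsmul b x"
proof (cases "b \<le> a")
  case True
  then have "a = (a - b) + b" by simp
  then have 1: "nsmul a x = nsmul (a-b) x + nsmul b x" by (metis nsmul_add)
  have e: "int a - int b = int (a - b)" using True by simp
  show ?thesis unfolding e zsmul_def using 1 by simp
next
  case False
  then have "b = (b - a) + a" by simp
  then have 1: "nsmul b x = nsmul (b-a) x + nsmul a x" by (metis nsmul_add)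
  have e: "int a - int b = - int (b - a)" "b - a > 0" using False by simp_all
  have e3: "nat (int b - int a) = b - a" by auto
  show ?thesis unfolding e(1) zsmul_def using 1 e(2) e3 by simp
qed

lemma zsmul_rep: obtains a b where "k = int a - int b" 
  using int_diff_cases by blast

lemma zsmul_nat: "zsmul (int n) x = nsmul n x"
  using zsmul_diff_nat[of n 0 x] by simp

lemma zsmul_add: "zsmul (k + l) x = zsmul k x + zsmul l x"
proof -
  obtain a b where k: "k = int a - int b" by (rule zsmul_rep)
  obtain c d where l: "l = int c - int d" by (rule zsmul_rep)
  have e: "k + l = int (a + c) - int (b + d)" using k l by simp
  have "zsmul (k+l) x = nsmul (a+c) x - nsmul (b+d) x" unfolding e by (rule zsmul_diff_nat)
  then show ?thesis unfolding k l zsmul_diff_nat by (simp add: nsmul_add)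
qed

lemma zsmul_0[simp]: "zsmul 0 x = 0" by (simp add: zsmul_def)
lemma zsmul_1[simp]: "zsmul 1 x = x" by (simp add: zsmul_def nsmul_def)
lemma zsmul_zero[simp]: "zsmul k (0::'a::ab_group_add) = 0" by (simp add: zsmul_def)

lemma zsmul_uminus: "zsmul (- k) x = - zsmul k x"
  using zsmul_add[of k "-k" x] by (simp add: eq_neg_iff_add_eq_0 add.commute)

lemma zsmul_diff: "zsmul (k - l) x = zsmul k x - zsmul l x"
  using zsmul_add[of k "-l" x] zsmul_uminus[of l x] by simp

lemma zsmul_plus: "zsmul k (x + y) = zsmul k x + zsmul k y"
proof -
  obtain a b where k: "k = int a - int b" by (rule zsmul_rep)
  show ?thesis using k by (simp add: zsmul_diff_nat nsmul_plus)
qed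

lemma zsmul_neg: "zsmul k (- x) = - zsmul k x"
  using zsmul_plus[of k x "-x"] by (simp add: add.inverse_unique)

lemma zsmul_minus: "zsmul k (x - y) = zsmul k x - zsmul k y"
  using zsmul_plus[of k x "-y"] zsmul_neg[of k y] by simp

lemma nsmul_diff: "nsmul n (x - y) = nsmul n x - nsmul n y"
  using nsmul_plus[of n x "-y"] nsmul_neg[of n y] by simp

lemma zsmul_mult: "zsmul (k * l) x = zsmul k (zsmul l x)"
proof -
  obtain a b where k: "k = int a - int b" by (rule zsmul_rep)
  obtain c d where l: "l = int c - int d" by (rule zsmul_rep)
  have "k * l = int (a*c + b*d) - int (a*d + b*c)" unfolding k l by (simp add: algebra_simps)
  then have "zsmul (k * l) x = nsmul (a*c + b*d) x - nsmul (a*d + b*c) x" by (simp only: zsmul_diff_nat)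
  also have "\<dots> = nsmul a (nsmul c x) + nsmul b (nsmul d x) - (nsmul a (nsmul d x) + nsmul b (nsmul c x))"
    by (simp only: nsmul_add nsmul_mult)
  also have "\<dots> = nsmul a (nsmul c x - nsmul d x) - nsmul b (nsmul c x - nsmul d x)"
    by (simp only: nsmul_diff) (simp add: algebra_simps)
  also have "\<dots> = zsmul k (zsmul l x)"
    unfolding k l by (simp only: zsmul_diff_nat)
  finally show ?thesis .
qed

lemma zsmul_commute: "zsmul k (zsmul l x) = zsmul l (zsmul k x)"
  by (metis zsmul_mult mult.commute)

lemma endos_zsmul: "f \<in> endos \<Longrightarrow> f (zsmul k x) = zsmul k (f x)"
  by (simp add: zsmul_def endos_nsmul endos_neg)

lemma endos_comp: "f \<in> endos \<Longrightarrow> g \<in> endos \<Longrightarrow> (\<lambda>v. f (g v)) \<in> endos"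
  by (simp add: endos_def)
lemma endos_id: "(\<lambda>v. v) \<in> endos"
  by (simp add: endos_def)
lemma endos_sub: "f \<in> endos \<Longrightarrow> g \<in> endos \<Longrightarrow> (\<lambda>v. f v - g v) \<in> endos"
  by (simp add: endos_def)
lemma endos_I: "(\<And>x y. f (x + y) = f x + f y) \<Longrightarrow> f \<in> endos"
  by (simp add: endos_def)

lemma End_simps: "carrier (End_ring A) = endos" "monoid.mult (End_ring A) = (\<circ>)"
   "zero (End_ring A) = (\<lambda>_. 0)"
  by (simp_all add: End_ring_def)

lemma CE_unfold:
  fixes A :: "'a::ab_group_add itself" and a :: "'a \<Rightarrow> 'a"
  assumes "centrally_essential (End_ring A)" "a \<in> endos" "a \<noteq> (\<lambda>_. 0)"
  shows "\<exists>x y. x \<in> endos \<and> y \<in> endos \<and> (\<forall>h\<in>endos. \<forall>v. x (h v) = h (x v))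
     \<and> (\<forall>h\<in>endos. \<forall>v. y (h v) = h (y v)) \<and> y \<noteq> (\<lambda>_. 0) \<and> (\<forall>v. a (x v) = y v)"
proof -
  from assms obtain x y where xy: "x \<in> ring_center (End_ring A)" "y \<in> ring_center (End_ring A)"
    "x \<noteq> (\<lambda>_. 0)" "y \<noteq> (\<lambda>_. 0)" "a \<circ> x = y"
    unfolding centrally_essential_def End_simps by auto
  have c: "z \<in> endos \<and> (\<forall>h\<in>endos. \<forall>v. z (h v) = h (z v))" if "z \<in> ring_center (End_ring A)" for z
  proof -
    have "z \<in> endos" "\<forall>h\<in>endos. z \<circ> h = h \<circ> z"
      using that unfolding ring_center_def End_simps by auto
    then show ?thesis by (metis comp_apply)
  qed
  have 1: "\<forall>v. a (x v) = y v" using xy(5) by auto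
  show ?thesis using c[OF xy(1)] c[OF xy(2)] xy(4) 1 by blast
qed

lemma lemma_L:
  fixes A :: "'a::ab_group_add itself" and a :: "'a \<Rightarrow> 'a"
  assumes ce: "centrally_essential (End_ring A)" and a: "a \<in> endos" and e: "e \<in> endos"
    and ea: "\<And>v. e (a v) = a v" and ae: "\<And>v. a (e v) = 0"
  shows "a v = 0"
proof (rule ccontr)
  assume "a v \<noteq> 0"
  then have "a \<noteq> (\<lambda>_. 0)" by auto
  from CE_unfold[OF ce a this] obtain x y where xy: "x \<in> endos" "y \<in> endos"
    "\<forall>h\<in>endos. \<forall>v. x (h v) = h (x v)" "\<forall>h\<in>endos. \<forall>v. y (h v) = h (y v)"
    "y \<noteq> (\<lambda>_. 0)" "\<forall>v. a (x v) = y v" by blast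
  have "y w = 0" for w
  proof -
    have "y w = a (x w)" using xy(6) by simp
    also have "\<dots> = e (a (x w))" using ea by simp
    also have "\<dots> = e (y w)" using xy(6) by simp
    also have "\<dots> = y (e w)" using xy(4) e by metis
    also have "\<dots> = a (x (e w))" using xy(6) by simp
    also have "\<dots> = a (e (x w))" using xy(3) e by metis
    also have "\<dots> = 0" using ae by simp
    finally show ?thesis .
  qed
  then show False using xy(5) by auto
qed

lemma idem_central:
  fixes A :: "'a::ab_group_add itself" and r :: "'a \<Rightarrow> 'a"
  assumes ce: "centrally_essential (End_ring A)" and r: "r \<in> endos" and rr: "\<And>v. r (r v) = r v"
    and h: "h \<in> endos"
  shows "r (h v) = h (r v)"
proof -
  let ?a1 = "\<lambda>v. r (h (v - r v))"
  have a1: "?a1 \<in> endos"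
    by (rule endos_I) (simp add: endos_add[OF r] endos_add[OF h] endos_diff[OF r] endos_diff[OF h])
  have 1: "?a1 w = 0" for w
    by (rule lemma_L[OF ce a1 r]) (simp_all add: rr endos_diff[OF r] endos_diff[OF h] endos_0[OF h] endos_0[OF r])
  let ?a2 = "\<lambda>v. h (r v) - r (h (r v))"
  let ?e = "\<lambda>v. v - r v"
  have a2: "?a2 \<in> endos"
    by (rule endos_I) (simp add: endos_add[OF r] endos_add[OF h] endos_diff[OF r] endos_diff[OF h])
  have e: "?e \<in> endos" by (rule endos_I) (simp add: endos_add[OF r])
  have 2: "?a2 w = 0" for w
    by (rule lemma_L[OF ce a2 e]) (simp_all add: rr endos_diff[OF r] endos_diff[OF h] endos_0[OF h] endos_0[OF r])
  have "r (h v) = r (h (r v))" using 1[of v] by (simp add: endos_diff[OF h] endos_diff[OF r])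
  also have "\<dots> = h (r v)" using 2[of v] by simp
  finally show ?thesis .
qed

definition pgraph :: "('a::ab_group_add \<times> 'a) set \<Rightarrow> bool" where
  "pgraph G \<longleftrightarrow> (0,0) \<in> G \<and> (\<forall>a b c d. (a,b) \<in> G \<longrightarrow> (c,d) \<in> G \<longrightarrow> (a+c, b+d) \<in> G)
     \<and> (\<forall>a b. (a,b) \<in> G \<longrightarrow> (-a,-b) \<in> G) \<and> (\<forall>a b c. (a,b) \<in> G \<longrightarrow> (a,c) \<in> G \<longrightarrow> b = c)"

lemma pgraph_0: "pgraph G \<Longrightarrow> (0,0) \<in> G" by (simp add: pgraph_def)
lemma pgraph_add: "pgraph G \<Longrightarrow> (a,b) \<in> G \<Longrightarrow> (c,d) \<in> G \<Longrightarrow> (a+c, b+d) \<in> G"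
  by (simp add: pgraph_def)
lemma pgraph_neg: "pgraph G \<Longrightarrow> (a,b) \<in> G \<Longrightarrow> (-a,-b) \<in> G"
  by (simp add: pgraph_def)
lemma pgraph_fun: "pgraph G \<Longrightarrow> (a,b) \<in> G \<Longrightarrow> (a,c) \<in> G \<Longrightarrow> b = c"
  by (simp add: pgraph_def)
lemma pgraph_diff: "pgraph G \<Longrightarrow> (a,b) \<in> G \<Longrightarrow> (c,d) \<in> G \<Longrightarrow> (a-c, b-d) \<in> G"
  using pgraph_add[of G a b "-c" "-d"] pgraph_neg[of G c d] by simp

lemma pgraph_nsmul: "pgraph G \<Longrightarrow> (a,b) \<in> G \<Longrightarrow> (nsmul n a, nsmul n b) \<in> G"
  by (induction n) (simp_all add: pgraph_0 nsmul_Suc pgraph_add)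

lemma pgraph_zsmul: "pgraph G \<Longrightarrow> (a,b) \<in> G \<Longrightarrow> (zsmul k a, zsmul k b) \<in> G"
  unfolding zsmul_def by (cases "0 \<le> k") (simp_all add: pgraph_nsmul pgraph_neg)

lemma subgroup_nsmul: "subgroup_add T \<Longrightarrow> t \<in> T \<Longrightarrow> nsmul n t \<in> T"
  by (induction n) (simp_all add: subgroup_add_def nsmul_Suc)

lemma subgroup_zsmul: "subgroup_add T \<Longrightarrow> t \<in> T \<Longrightarrow> zsmul k t \<in> T"
  unfolding zsmul_def using subgroup_nsmul by (auto simp: subgroup_add_def)

lemma subgroup_diff: "subgroup_add T \<Longrightarrow> a \<in> T \<Longrightarrow> b \<in> T \<Longrightarrow> a - b \<in> T"
  unfolding subgroup_add_def by (metis diff_conv_add_uminus)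

lemma int_ideal:
  fixes I :: "int set"
  assumes "0 \<in> I" and cl: "\<And>k l a b. k \<in> I \<Longrightarrow> l \<in> I \<Longrightarrow> a*k + b*l \<in> I"
  shows "\<exists>d\<ge>0. \<forall>k. k \<in> I \<longleftrightarrow> d dvd k"
proof (cases "\<exists>k\<in>I. k \<noteq> 0")
  case False
  then show ?thesis using assms(1) by (intro exI[of _ 0]) auto
next
  case True
  then obtain k where k: "k \<in> I" "k \<noteq> 0" by blast
  have "\<exists>n::nat. n > 0 \<and> int n \<in> I"
  proof (cases "k > 0")
    case True then show ?thesis using k by (intro exI[of _ "nat k"]) auto
  next
    case False
    have "(-1)*k + 0*k \<in> I" using cl k by blast
    then show ?thesis using False k by (intro exI[of _ "nat (-k)"]) auto
  qed
  define d where "d = (LEAST n::nat. n > 0 \<and> int n \<in> I)"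
  have d: "d > 0" "int d \<in> I" using LeastI_ex[OF \<open>\<exists>n::nat. n > 0 \<and> int n \<in> I\<close>] d_def by auto
  have dmin: "\<And>n::nat. n > 0 \<Longrightarrow> int n \<in> I \<Longrightarrow> d \<le> n" unfolding d_def by (rule Least_le) simp
  have "k \<in> I \<longleftrightarrow> int d dvd k" for k
  proof
    assume kI: "k \<in> I"
    have "1 * k + (-(k div int d)) * int d \<in> I" using cl kI d by blast
    moreover have "1 * k + (-(k div int d)) * int d = k mod int d"
      by (simp add: minus_div_mult_eq_mod[symmetric] algebra_simps)
    ultimately have m: "k mod int d \<in> I" by simp
    have "k mod int d = 0"
    proof (rule ccontr)
      assume "k mod int d \<noteq> 0"
      moreover have "k mod int d \<ge> 0" "k mod int d < int d" using d by auto
      ultimately have "nat (k mod int d) > 0" "int (nat (k mod int d)) \<in> I" using m by auto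
      then have "d \<le> nat (k mod int d)" by (rule dmin)
      then have "int d \<le> k mod int d" using le_nat_iff \<open>k mod int d \<ge> 0\<close> by blast
      then show False using \<open>k mod int d < int d\<close> by linarith
    qed
    then show "int d dvd k" by auto
  next
    assume "int d dvd k"
    then obtain q where "k = int d * q" by (rule dvdE)
    then have "k = q * int d" by simp
    moreover have "q * int d + 0 * int d \<in> I" using cl d by blast
    ultimately show "k \<in> I" by simp
  qed
  then show ?thesis by (intro exI[of _ "int d"]) auto
qed

lemma zorn_ext:
  fixes G0 :: "('a::ab_group_add \<times> 'a) set" and T :: "'a set"
  assumes G0: "pgraph G0" "\<forall>(a,b)\<in>G0. b \<in> T" and T: "subgroup_add T"
  and step: "\<And>G y d. pgraph G \<Longrightarrow> G0 \<subseteq> G \<Longrightarrow> \<forall>(a,b)\<in>G. b \<in> T \<Longrightarrow> d \<ge> 0 \<Longrightarrow>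
      (\<forall>k. (\<exists>u. (zsmul k y, u) \<in> G) \<longleftrightarrow> d dvd k) \<Longrightarrow>
      \<exists>t\<in>T. \<forall>u. (zsmul d y, u) \<in> G \<longrightarrow> u = zsmul d t"
  shows "\<exists>h\<in>endos. (\<forall>a. h a \<in> T) \<and> (\<forall>(a,b)\<in>G0. h a = b)"
proof -
  define AA where "AA = {G. pgraph G \<and> G0 \<subseteq> G \<and> (\<forall>(a,b)\<in>G. b \<in> T)}"
  have G0A: "G0 \<in> AA" using G0 unfolding AA_def by auto
  have "\<forall>C\<in>chains AA. \<exists>U\<in>AA. \<forall>X\<in>C. X \<subseteq> U"
  proof
    fix C assume C: "C \<in> chains AA"
    then have CA: "C \<subseteq> AA" and ch: "\<And>X Y. X \<in> C \<Longrightarrow> Y \<in> C \<Longrightarrow> X \<subseteq> Y \<or> Y \<subseteq> X"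
      unfolding chains_def chain_subset_def by auto
    show "\<exists>U\<in>AA. \<forall>X\<in>C. X \<subseteq> U"
    proof (cases "C = {}")
      case True then show ?thesis using G0A by auto
    next
      case False
      then obtain X0 where X0: "X0 \<in> C" by auto
      have pg: "pgraph X" "G0 \<subseteq> X" "\<forall>(a,b)\<in>X. b \<in> T" if "X \<in> C" for X
        using CA that unfolding AA_def by auto
      have two: "\<exists>X\<in>C. p \<in> X \<and> q \<in> X" if "p \<in> \<Union>C" "q \<in> \<Union>C" for p q
      proof -
        from that(1) obtain X where "X \<in> C" "p \<in> X" by blast
        moreover from that(2) obtain Y where "Y \<in> C" "q \<in> Y" by blast
        ultimately show ?thesis using ch[of X Y] by auto
      qed
      have "pgraph (\<Union>C)"
        unfolding pgraph_def
      proof (intro conjI allI impI)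
        show "(0,0) \<in> \<Union>C" using X0 pg(1)[OF X0] pgraph_0 by blast
      next
        fix a b c d assume "(a,b) \<in> \<Union>C" "(c,d) \<in> \<Union>C"
        then obtain X where "X \<in> C" "(a,b) \<in> X" "(c,d) \<in> X" using two by blast
        then show "(a+c, b+d) \<in> \<Union>C" using pg(1) pgraph_add by blast
      next
        fix a b assume "(a,b) \<in> \<Union>C"
        then obtain X where "X \<in> C" "(a,b) \<in> X" by blast
        then show "(-a, -b) \<in> \<Union>C" using pg(1) pgraph_neg by blast
      next
        fix a b c assume "(a,b) \<in> \<Union>C" "(a,c) \<in> \<Union>C"
        then obtain X where "X \<in> C" "(a,b) \<in> X" "(a,c) \<in> X" using two by blast
        then show "b = c" using pg(1) pgraph_fun by blast
      qed
      moreover have "G0 \<subseteq> \<Union>C" using X0 pg(2) by blast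
      moreover have "\<forall>(a,b)\<in>\<Union>C. b \<in> T" using pg(3) by blast
      ultimately have "\<Union>C \<in> AA" unfolding AA_def by blast
      then show ?thesis by blast
    qed
  qed
  from Zorn_Lemma2[OF this] obtain M where M: "M \<in> AA" and Mmax: "\<And>X. X \<in> AA \<Longrightarrow> M \<subseteq> X \<Longrightarrow> X = M"
    by blast
  have Mp: "pgraph M" "G0 \<subseteq> M" "\<forall>(a,b)\<in>M. b \<in> T" using M unfolding AA_def by auto
  have total: "\<exists>u. (y,u) \<in> M" for y
  proof (rule ccontr)
    assume ny: "\<not> (\<exists>u. (y,u) \<in> M)"
    define I where "I = {k. \<exists>u. (zsmul k y, u) \<in> M}"
    have "0 \<in> I" unfolding I_def using pgraph_0[OF Mp(1)] by auto
    moreover have "a*k + b*l \<in> I" if "k \<in> I" "l \<in> I" for k l a b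
    proof -
      from that(1) obtain u where u: "(zsmul k y, u) \<in> M" unfolding I_def by blast
      from that(2) obtain w where w: "(zsmul l y, w) \<in> M" unfolding I_def by blast
      note uw = u w
      have "(zsmul a (zsmul k y) + zsmul b (zsmul l y), zsmul a u + zsmul b w) \<in> M"
        using uw by (intro pgraph_add[OF Mp(1)] pgraph_zsmul[OF Mp(1)])
      then show ?thesis unfolding I_def by (auto simp: zsmul_add zsmul_mult)
    qed
    ultimately obtain d where d: "d \<ge> 0" "\<forall>k. k \<in> I \<longleftrightarrow> d dvd k" using int_ideal by metis
    then have dI: "\<forall>k. (\<exists>u. (zsmul k y, u) \<in> M) \<longleftrightarrow> d dvd k" unfolding I_def by auto
    obtain t where t: "t \<in> T" "\<forall>u. (zsmul d y, u) \<in> M \<longrightarrow> u = zsmul d t"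
      using step[OF Mp d(1) dI] by blast
    define G' where "G' = {(a + zsmul k y, b + zsmul k t) | a b k. (a,b) \<in> M}"
    have G'I: "(a1 + zsmul k y, b1 + zsmul k t) \<in> G'" if "(a1,b1) \<in> M" for a1 b1 k
      unfolding G'_def using that by blast
    have "pgraph G'"
      unfolding pgraph_def
    proof (intro conjI allI impI)
      show "(0,0) \<in> G'" using G'I[OF pgraph_0[OF Mp(1)], of 0] by simp
    next
      fix a b c e assume "(a,b) \<in> G'" "(c,e) \<in> G'"
      then obtain a1 b1 k1 a2 b2 k2 where m: "(a1,b1) \<in> M" "(a2,b2) \<in> M"
        "a = a1 + zsmul k1 y" "b = b1 + zsmul k1 t" "c = a2 + zsmul k2 y" "e = b2 + zsmul k2 t"
        unfolding G'_def by blast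
      have "(a1 + a2, b1 + b2) \<in> M" using m pgraph_add[OF Mp(1)] by blast
      from G'I[OF this, of "k1+k2"] show "(a+c, b+e) \<in> G'"
        using m by (simp add: zsmul_add algebra_simps)
    next
      fix a b assume "(a,b) \<in> G'"
      then obtain a1 b1 k1 where "(a1,b1) \<in> M" "a = a1 + zsmul k1 y" "b = b1 + zsmul k1 t"
        unfolding G'_def by blast
      moreover have "(-a1, -b1) \<in> M" using calculation pgraph_neg[OF Mp(1)] by blast
      ultimately show "(-a, -b) \<in> G'" using G'I[of "-a1" "-b1" "-k1"]
        by (simp add: zsmul_uminus algebra_simps)
    next
      fix a b c assume "(a,b) \<in> G'" "(a,c) \<in> G'"
      then obtain a1 b1 k1 a2 b2 k2 where m: "(a1,b1) \<in> M" "(a2,b2) \<in> M"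
        "a = a1 + zsmul k1 y" "b = b1 + zsmul k1 t" "a = a2 + zsmul k2 y" "c = b2 + zsmul k2 t"
        unfolding G'_def by blast
      have 1: "(a1 - a2, b1 - b2) \<in> M" using m pgraph_diff[OF Mp(1)] by blast
      have 2: "a1 - a2 = zsmul (k2 - k1) y" using m by (simp add: zsmul_diff algebra_simps)
      have "d dvd (k2 - k1)" using dI 1 2 by metis
      then obtain q where q: "k2 - k1 = d * q" by (auto elim: dvdE)
      have "\<exists>u. (zsmul d y, u) \<in> M" using dI by simp
      then obtain ud where ud: "(zsmul d y, ud) \<in> M" by blast
      have "ud = zsmul d t" using t ud by blast
      have "(zsmul q (zsmul d y), zsmul q ud) \<in> M" using ud pgraph_zsmul[OF Mp(1)] by blast
      then have "(a1 - a2, zsmul (k2 - k1) t) \<in> M"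
        using 2 q \<open>ud = zsmul d t\<close> by (simp add: zsmul_mult[symmetric] mult.commute)
      then have "b1 - b2 = zsmul (k2 - k1) t" using 1 pgraph_fun[OF Mp(1)] by blast
      then show "b = c" using m by (simp add: zsmul_diff algebra_simps)
    qed
    moreover have "M \<subseteq> G'" using G'I[of _ _ 0] by auto
    moreover have "\<forall>(a,b)\<in>G'. b \<in> T"
    proof
      fix p assume "p \<in> G'"
      then obtain a1 b1 k1 where "(a1,b1) \<in> M" "p = (a1 + zsmul k1 y, b1 + zsmul k1 t)"
        unfolding G'_def by blast
      moreover have "b1 \<in> T" using calculation Mp(3) by blast
      moreover have "zsmul k1 t \<in> T" using T t(1) subgroup_zsmul by blast
      ultimately show "case p of (a,b) \<Rightarrow> b \<in> T" using T
        unfolding subgroup_add_def by auto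
    qed
    ultimately have "G' \<in> AA" using Mp(2) unfolding AA_def by blast
    then have "G' = M" using Mmax \<open>M \<subseteq> G'\<close> by blast
    moreover have "(y, t) \<in> G'" unfolding G'_def using pgraph_0[OF Mp(1)]
      by (auto intro!: exI[of _ 0] exI[of _ 1])
    ultimately show False using ny by blast
  qed
  define h where "h a = (THE b. (a,b) \<in> M)" for a
  have hM: "(a, h a) \<in> M" for a
  proof -
    obtain u where u: "(a,u) \<in> M" using total by blast
    have "h a = u" unfolding h_def using u pgraph_fun[OF Mp(1)] by blast
    then show ?thesis using u by simp
  qed
  have hu: "h a = u" if "(a,u) \<in> M" for a u using hM that pgraph_fun[OF Mp(1)] by blast
  have "h \<in> endos"
    by (rule endos_I) (rule hu, rule pgraph_add[OF Mp(1) hM hM])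
  moreover have "\<forall>a. h a \<in> T" using hM Mp(3) by blast
  moreover have "\<forall>(a,b)\<in>G0. h a = b" using hu Mp(2) by blast
  ultimately show ?thesis by blast
qed

lemma ball_pairD: "\<forall>(a,b)\<in>S. h a = b \<Longrightarrow> (a,b) \<in> S \<Longrightarrow> h a = b"
  by auto

lemma divisible_subgroupD: "divisible_subgroup D \<Longrightarrow> subgroup_add D"
  by (simp add: divisible_subgroup_def)

lemma div_step:
  assumes D: "divisible_subgroup D" and G: "pgraph G" "\<forall>(a,b)\<in>G. b \<in> D" and d: "d \<ge> 0"
    and dI: "\<forall>k. (\<exists>u. (zsmul k y, u) \<in> G) \<longleftrightarrow> d dvd k"
  shows "\<exists>t\<in>D. \<forall>u. (zsmul d y, u) \<in> G \<longrightarrow> u = zsmul d t"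
proof (cases "d = 0")
  case True
  have "0 \<in> D" using D unfolding divisible_subgroup_def subgroup_add_def by blast
  moreover have "\<forall>u. (zsmul d y, u) \<in> G \<longrightarrow> u = zsmul d 0"
    using True pgraph_0[OF G(1)] pgraph_fun[OF G(1)] by auto
  ultimately show ?thesis by blast
next
  case False
  have "\<exists>u. (zsmul d y, u) \<in> G" using dI by simp
  then obtain u where u: "(zsmul d y, u) \<in> G" by blast
  have "u \<in> D" using u G(2) by blast
  moreover have "nat d > 0" using False d by simp
  ultimately obtain e where e: "e \<in> D" "nsmul (nat d) e = u"
    using D unfolding divisible_subgroup_def by blast
  have "zsmul d e = u" using e d zsmul_nat[of "nat d" e] by simp
  then show ?thesis using e(1) u pgraph_fun[OF G(1)] by metis
qed

lemma div_retract:
  assumes D: "divisible_subgroup D"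
  shows "\<exists>r\<in>endos. (\<forall>a. r a \<in> D) \<and> (\<forall>d\<in>D. r d = d)"
proof -
  let ?G0 = "(\<lambda>d. (d,d)) ` D"
  have S: "subgroup_add D" using D by (rule divisible_subgroupD)
  have pg: "pgraph ?G0" using S unfolding pgraph_def subgroup_add_def by auto
  have vals: "\<forall>(a,b)\<in>?G0. b \<in> D" by auto
  have "\<exists>h\<in>endos. (\<forall>a. h a \<in> D) \<and> (\<forall>(a,b)\<in>?G0. h a = b)"
    apply (rule zorn_ext[OF pg vals S])
    apply (rule div_step[OF D])
       apply assumption+
    done
  then show ?thesis by auto
qed

lemma div_ext:
  assumes D: "divisible_subgroup D" and d: "d \<in> D" and ann: "\<forall>k. zsmul k y = 0 \<longrightarrow> zsmul k d = 0"
  shows "\<exists>h\<in>endos. (\<forall>a. h a \<in> D) \<and> h y = d"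
proof -
  let ?G0 = "(\<lambda>k. (zsmul k y, zsmul k d)) ` UNIV"
  have S: "subgroup_add D" using D by (rule divisible_subgroupD)
  have "pgraph ?G0"
    unfolding pgraph_def
  proof (intro conjI allI impI)
    show "(0,0) \<in> ?G0" by (auto intro!: image_eqI[of _ _ 0])
  next
    fix a b c e assume "(a,b) \<in> ?G0" "(c,e) \<in> ?G0"
    then obtain k l where "a = zsmul k y" "b = zsmul k d" "c = zsmul l y" "e = zsmul l d" by auto
    then show "(a+c, b+e) \<in> ?G0" by (auto intro!: image_eqI[of _ _ "k+l"] simp: zsmul_add)
  next
    fix a b assume "(a,b) \<in> ?G0"
    then obtain k where "a = zsmul k y" "b = zsmul k d" by auto
    then show "(-a, -b) \<in> ?G0" by (auto intro!: image_eqI[of _ _ "-k"] simp: zsmul_uminus)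
  next
    fix a b c assume ab: "(a,b) \<in> ?G0" and ac: "(a,c) \<in> ?G0"
    from ab obtain k where k: "a = zsmul k y" "b = zsmul k d" by auto
    from ac obtain l where l: "a = zsmul l y" "c = zsmul l d" by auto
    note kl = k l
    then have "zsmul (k - l) y = 0" by (simp add: zsmul_diff)
    then have "zsmul (k - l) d = 0" using ann by blast
    then show "b = c" using kl by (simp add: zsmul_diff)
  qed
  moreover have "\<forall>(a,b)\<in>?G0. b \<in> D" using subgroup_zsmul[OF S d] by auto
  ultimately have "\<exists>h\<in>endos. (\<forall>a. h a \<in> D) \<and> (\<forall>(a,b)\<in>?G0. h a = b)"
    apply -
    apply (rule zorn_ext[OF _ _ S])
      apply assumption+
    apply (rule div_step[OF D])
       apply assumption+
    done
  then obtain h where "h \<in> endos" "\<forall>a. h a \<in> D" "\<forall>(a,b)\<in>?G0. h a = b" by blast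
  moreover have "h (zsmul 1 y) = zsmul 1 d"
    by (rule ball_pairD[OF calculation(3)]) (rule rangeI)
  ultimately show ?thesis by auto
qed

lemma lemma_div:
  fixes A :: "'a::ab_group_add itself" and r :: "'a \<Rightarrow> 'a"
  assumes ce: "centrally_essential (End_ring A)" and D: "divisible_subgroup D"
    and r: "r \<in> endos" "\<forall>a. r a \<in> D" "\<forall>d\<in>D. r d = d"
    and y: "r y = 0" and d: "d \<in> D" and ann: "\<forall>k. zsmul k y = 0 \<longrightarrow> zsmul k d = 0"
  shows "d = 0"
proof -
  obtain h where h: "h \<in> endos" "\<forall>a. h a \<in> D" "h y = d" using div_ext[OF D d ann] by blast
  have rr: "r (r v) = r v" for v using r by blast
  have "r (h y) = h (r y)" by (rule idem_central[OF ce r(1) rr h(1)])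
  then show ?thesis using h r d y endos_0[OF h(1)] by simp
qed

lemma good_retract:
  assumes m: "m > 0" and ord: "\<forall>k. zsmul k x = 0 \<longleftrightarrow> m dvd k"
    and pure: "\<forall>k a. zsmul k x = zsmul m a \<longrightarrow> zsmul k x = 0"
  shows "\<exists>p\<in>endos. (\<forall>a. \<exists>k. p a = zsmul k x) \<and> p x = x"
proof -
  let ?T = "range (\<lambda>k. zsmul k x)"
  have S: "subgroup_add ?T" unfolding subgroup_add_def
  proof (intro conjI ballI)
    show "0 \<in> ?T" by (auto intro!: image_eqI[of _ _ 0])
  next
    fix a b assume "a \<in> ?T" "b \<in> ?T"
    then show "a + b \<in> ?T" by (auto simp: zsmul_add[symmetric])
  next
    fix a assume "a \<in> ?T"
    then show "- a \<in> ?T" by (auto simp: zsmul_uminus[symmetric])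
  qed
  let ?G0 = "(\<lambda>(k,a). (zsmul k x + zsmul m a, zsmul k x)) ` UNIV"
  have G0I: "(zsmul k x + zsmul m a, zsmul k x) \<in> ?G0" for k a
    by (rule image_eqI[of _ _ "(k,a)"]) auto
  have "pgraph ?G0"
    unfolding pgraph_def
  proof (intro conjI allI impI)
    show "(0,0) \<in> ?G0" using G0I[of 0 0] by simp
  next
    fix a b c e assume "(a,b) \<in> ?G0" "(c,e) \<in> ?G0"
    then obtain k1 a1 k2 a2 where "a = zsmul k1 x + zsmul m a1" "b = zsmul k1 x"
      "c = zsmul k2 x + zsmul m a2" "e = zsmul k2 x" by auto
    then show "(a+c, b+e) \<in> ?G0" using G0I[of "k1+k2" "a1+a2"]
      by (simp add: zsmul_add zsmul_plus algebra_simps)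
  next
    fix a b assume "(a,b) \<in> ?G0"
    then obtain k1 a1 where "a = zsmul k1 x + zsmul m a1" "b = zsmul k1 x" by auto
    then show "(-a, -b) \<in> ?G0" using G0I[of "-k1" "-a1"]
      by (simp add: zsmul_uminus zsmul_neg algebra_simps)
  next
    fix a b c assume ab: "(a,b) \<in> ?G0" and ac: "(a,c) \<in> ?G0"
    from ab obtain k1 a1 where k1: "a = zsmul k1 x + zsmul m a1" "b = zsmul k1 x" by auto
    from ac obtain k2 a2 where k2: "a = zsmul k2 x + zsmul m a2" "c = zsmul k2 x" by auto
    note kk = k1 k2
    then have "zsmul (k1 - k2) x = zsmul m (a2 - a1)"
      by (simp add: zsmul_diff zsmul_minus algebra_simps)
    then have "zsmul (k1 - k2) x = 0" using pure by blast
    then show "b = c" using kk by (simp add: zsmul_diff)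
  qed
  moreover have "\<forall>(a,b)\<in>?G0. b \<in> ?T" by auto
  moreover have "\<exists>t\<in>?T. \<forall>u. (zsmul d y, u) \<in> G \<longrightarrow> u = zsmul d t"
    if G: "pgraph G" "?G0 \<subseteq> G" "\<forall>(a,b)\<in>G. b \<in> ?T" and d: "d \<ge> 0"
      and dI: "\<forall>k. (\<exists>u. (zsmul k y, u) \<in> G) \<longleftrightarrow> d dvd k" for G y d
  proof -
    have my: "(zsmul m y, 0) \<in> G" using G0I[of 0 y] G(2) by auto
    then have "d dvd m" using dI by blast
    then obtain q where q: "m = d * q" by (rule dvdE)
    have "d \<noteq> 0" "q \<noteq> 0" using q m by auto
    have "\<exists>u. (zsmul d y, u) \<in> G" using dI by simp
    then obtain u where u: "(zsmul d y, u) \<in> G" by blast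
    then obtain j where j: "u = zsmul j x" using G(3) by blast
    have "(zsmul q (zsmul d y), zsmul q u) \<in> G" using pgraph_zsmul[OF G(1) u] .
    then have "(zsmul m y, zsmul (q*j) x) \<in> G" using q j by (simp add: zsmul_mult[symmetric] mult.commute)
    then have "zsmul (q*j) x = 0" using my pgraph_fun[OF G(1)] by blast
    then have "d * q dvd q * j" using ord q by simp
    then have "d dvd j" using \<open>q \<noteq> 0\<close> by (simp add: mult.commute)
    then obtain j' where j': "j = d * j'" by (rule dvdE)
    have "u = zsmul d (zsmul j' x)" using j j' by (simp add: zsmul_mult)
    then show ?thesis using u pgraph_fun[OF G(1)] by blast
  qed
  ultimately have "\<exists>h\<in>endos. (\<forall>a. h a \<in> ?T) \<and> (\<forall>(a,b)\<in>?G0. h a = b)"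
    by (rule zorn_ext[OF _ _ S])
  then obtain h where h: "h \<in> endos" "\<forall>a. h a \<in> ?T" "\<forall>(a,b)\<in>?G0. h a = b" by blast
  have "h (zsmul 1 x + zsmul m 0) = zsmul 1 x" by (rule ball_pairD[OF h(3) G0I])
  then have "h x = x" by simp
  then show ?thesis using h by blast
qed

lemma factor_hom:
  assumes p: "p \<in> endos" "\<forall>a. \<exists>k. p a = zsmul k x" and ann: "\<forall>k. zsmul k x = 0 \<longrightarrow> zsmul k w = 0"
  shows "\<exists>h\<in>endos. \<forall>a k. p a = zsmul k x \<longrightarrow> h a = zsmul k w"
proof -
  define h where "h a = zsmul (SOME k. p a = zsmul k x) w" for a
  have key: "h a = zsmul k w" if "p a = zsmul k x" for a k
  proof -
    have "p a = zsmul (SOME k. p a = zsmul k x) x" using someI_ex[OF p(2)[rule_format, of a]] .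
    then have "zsmul ((SOME k. p a = zsmul k x) - k) x = 0" using that by (simp add: zsmul_diff)
    then have "zsmul ((SOME k. p a = zsmul k x) - k) w = 0" using ann by blast
    then show ?thesis unfolding h_def by (simp add: zsmul_diff)
  qed
  have "h \<in> endos"
  proof (rule endos_I)
    fix a b
    obtain k l where "p a = zsmul k x" "p b = zsmul l x" using p(2) by blast
    then have "p (a + b) = zsmul (k + l) x" using endos_add[OF p(1)] by (simp add: zsmul_add)
    then have "h (a + b) = zsmul (k + l) w" by (rule key)
    then show "h (a + b) = h a + h b" using key \<open>p a = zsmul k x\<close> \<open>p b = zsmul l x\<close>
      by (simp add: zsmul_add)
  qed
  then show ?thesis using key by blast
qed

lemma zsmul_kill_mult: "zsmul m x = 0 \<Longrightarrow> zsmul (q * m) x = 0" "zsmul m x = 0 \<Longrightarrow> zsmul (m * q) x = 0"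
  by (metis zsmul_mult zsmul_zero mult.commute)+

lemma zsmul_kill_dvd: "zsmul m x = 0 \<Longrightarrow> m dvd k \<Longrightarrow> zsmul k x = 0"
  by (metis dvdE zsmul_kill_mult(2))

lemma zsmul_gcd_kill:
  assumes "zsmul k x = 0" "zsmul l x = 0"
  shows "zsmul (gcd k l) x = 0"
proof -
  obtain a b where "a * k + b * l = gcd k l" using bezout_int by blast
  then have "zsmul (gcd k l) x = zsmul a (zsmul k x) + zsmul b (zsmul l x)"
    by (metis zsmul_add zsmul_mult)
  then show ?thesis using assms by simp
qed

lemma ord_pp:
  fixes p :: int
  assumes p: "prime p" and o1: "zsmul (p^Suc N) x = 0" and o2: "zsmul (p^N) x \<noteq> 0"
    and k: "zsmul k x = 0"
  shows "p^Suc N dvd k"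
proof -
  let ?g = "gcd k (p^Suc N)"
  have g0: "zsmul ?g x = 0" by (rule zsmul_gcd_kill[OF k o1])
  have "?g dvd p^Suc N" by simp
  then obtain r where r: "r \<le> Suc N" "normalize ?g = p^r" using divides_primepow[OF p] by metis
  have gr: "?g = p^r" using r(2) by simp
  show ?thesis
  proof (cases "r = Suc N")
    case True
    then show ?thesis using gr by (metis gcd_dvd1)
  next
    case False
    then have "r \<le> N" using r(1) by simp
    then have "p^N = p^(N-r) * p^r" by (simp add: power_add[symmetric])
    then have "zsmul (p^N) x = zsmul (p^(N-r)) (zsmul ?g x)" using gr by (simp add: zsmul_mult)
    then show ?thesis using g0 o2 by simp
  qed
qed

lemma prime_ord:
  fixes p :: int
  assumes p: "prime p" and pu: "zsmul p u = 0" and u: "u \<noteq> 0"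
  shows "zsmul k u = 0 \<longleftrightarrow> p dvd k"
proof
  assume "zsmul k u = 0"
  then show "p dvd k" using ord_pp[of p 0 u k] p pu u by simp
next
  assume "p dvd k"
  then obtain q where "k = p * q" by (rule dvdE)
  then show "zsmul k u = 0" using pu by (simp add: zsmul_mult mult.commute[of p])
qed

lemma H2:
  fixes p :: int
  assumes p: "prime p" and ps: "zsmul p s = 0" and ua: "u = zsmul a s" and u: "u \<noteq> 0"
    and zb: "z = zsmul b s"
  shows "\<exists>k. z = zsmul k u"
proof -
  have "\<not> p dvd a"
  proof
    assume "p dvd a"
    then obtain q where "a = p * q" by (rule dvdE)
    then have "u = 0" using ua ps by (simp add: zsmul_mult mult.commute[of p])
    then show False using u by simp
  qed
  then have "coprime p a" using prime_imp_coprime[OF p] by blast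
  then obtain c e where ce: "c * a + e * p = 1"
    using bezout_int[of a p] by (metis gcd.commute coprime_iff_gcd_eq_1 mult.commute)
  have "zsmul c u = zsmul (c * a) s" using ua by (simp add: zsmul_mult)
  also have "c * a = 1 - e * p" using ce by simp
  also have "zsmul (1 - e * p) s = s" using ps by (simp add: zsmul_diff zsmul_mult)
  finally have "s = zsmul c u" by simp
  then have "z = zsmul (b * c) u" using zb by (simp add: zsmul_mult)
  then show ?thesis by blast
qed

lemma div_by_primes:
  assumes S: "subgroup_add D"
    and pr: "\<And>q x. prime (q::nat) \<Longrightarrow> x \<in> D \<Longrightarrow> \<exists>e\<in>D. zsmul (int q) e = x"
  shows "divisible_subgroup D"
proof -
  have "\<forall>x\<in>D. \<exists>e\<in>D. zsmul (int n) e = x" if "n > 0" for n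
    using that
  proof (induction n rule: less_induct)
    case (less n)
    show ?case
    proof (cases "n = 1")
      case True then show ?thesis by auto
    next
      case False
      then obtain q where q: "prime q" "q dvd n" using prime_factor_nat by blast
      from q(2) obtain n' where n': "n = q * n'" by (rule dvdE)
      have "n' < n" "n' > 0" using n' less.prems prime_gt_1_nat[OF q(1)] by auto
      note IH = less.IH[OF this]
      show ?thesis
      proof
        fix x assume "x \<in> D"
        then obtain e1 where e1: "e1 \<in> D" "zsmul (int n') e1 = x" using IH by blast
        then obtain e2 where e2: "e2 \<in> D" "zsmul (int q) e2 = e1" using pr q(1) by blast
        have "zsmul (int n) e2 = x" using e1 e2 n' by (simp add: zsmul_mult mult.commute)
        then show "\<exists>e\<in>D. zsmul (int n) e = x" using e2 by blast
      qed
    qed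
  qed
  then show ?thesis using S unfolding divisible_subgroup_def by (simp add: zsmul_nat)
qed

lemma Cp_case1:
  fixes A :: "'a::ab_group_add itself" and p :: int and s u z :: 'a
  assumes ce: "centrally_essential (End_ring A)" and p: "prime p"
    and s: "zsmul p s = 0" "s \<noteq> 0" and nh: "\<not> (\<exists>a. s = zsmul (p^j) a)"
    and u: "zsmul p u = 0" "u \<noteq> 0" and z: "zsmul p z = 0"
  shows "\<exists>k. z = zsmul k u"
proof -
  define P where "P j \<longleftrightarrow> \<not> (\<exists>a. s = zsmul (p^j) a)" for j
  have Pj: "P j" using nh P_def by simp
  define j0 where "j0 = (LEAST j. P j)"
  have Pj0: "P j0" unfolding j0_def by (rule LeastI[of P, OF Pj])
  have "j0 \<noteq> 0"
  proof
    assume "j0 = 0"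
    then have "P 0" using Pj0 by simp
    then show False unfolding P_def by (metis power_0 zsmul_1)
  qed
  then obtain N where N: "j0 = Suc N" using not0_implies_Suc by blast
  have "\<not> P N" using N j0_def not_less_Least[of N P] by simp
  then obtain y where y: "s = zsmul (p^N) y" unfolding P_def by blast
  have PSN: "\<not> (\<exists>a. s = zsmul (p^Suc N) a)" using Pj0 N P_def by simp
  have o1: "zsmul (p^Suc N) y = 0" using y s by (simp add: zsmul_mult)
  have o2: "zsmul (p^N) y \<noteq> 0" using y s by simp
  have pos: "p^Suc N > 0" using prime_gt_1_int[OF p] by simp
  have ord: "\<forall>k. zsmul k y = 0 \<longleftrightarrow> p^Suc N dvd k"
  proof (intro allI iffI)
    fix k assume "zsmul k y = 0"
    then show "p^Suc N dvd k" by (rule ord_pp[OF p o1 o2])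
  next
    fix k assume "p^Suc N dvd k"
    then show "zsmul k y = 0" using o1 zsmul_kill_dvd by blast
  qed
  have pure: "\<forall>k a. zsmul k y = zsmul (p^Suc N) a \<longrightarrow> zsmul k y = 0"
  proof (intro allI impI)
    fix k a assume ka: "zsmul k y = zsmul (p^Suc N) a"
    let ?g = "gcd k (p^Suc N)"
    obtain al be where ab: "al * k + be * p^Suc N = ?g" using bezout_int by blast
    have "zsmul ?g y = zsmul al (zsmul k y) + zsmul be (zsmul (p^Suc N) y)"
      using ab by (metis zsmul_add zsmul_mult)
    then have gy: "zsmul ?g y = zsmul (p^Suc N) (zsmul al a)"
      using ka o1 by (simp add: zsmul_commute)
    have "?g dvd p^Suc N" by simp
    then obtain r where r: "r \<le> Suc N" "normalize ?g = p^r" using divides_primepow[OF p] by metis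
    have gr: "?g = p^r" using r(2) by simp
    show "zsmul k y = 0"
    proof (cases "r = Suc N")
      case True
      then have "p^Suc N dvd k" using gr by (metis gcd_dvd1)
      then show ?thesis using ord by blast
    next
      case False
      then have "r \<le> N" using r(1) by simp
      then have "p^N = p^(N-r) * p^r" by (simp add: power_add[symmetric])
      then have "s = zsmul (p^(N-r)) (zsmul ?g y)" using gr y by (simp add: zsmul_mult)
      also have "\<dots> = zsmul (p^Suc N) (zsmul (p^(N-r)) (zsmul al a))" using gy by (simp add: zsmul_commute)
      finally show ?thesis using PSN by blast
    qed
  qed
  obtain pi where pi: "pi \<in> endos" "\<forall>a. \<exists>k. pi a = zsmul k y" "pi y = y"
    using good_retract[OF pos ord pure] by blast
  have pipi: "pi (pi v) = pi v" for v
  proof -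
    obtain k where "pi v = zsmul k y" using pi(2) by blast
    then show ?thesis using pi(3) endos_zsmul[OF pi(1)] by simp
  qed
  have inY: "\<exists>k. w = zsmul k y" if w: "zsmul p w = 0" for w
  proof -
    define w' where "w' = w - pi w"
    have pw': "zsmul p w' = 0" unfolding w'_def using w endos_zsmul[OF pi(1), of p w] endos_0[OF pi(1)]
      by (simp add: zsmul_minus)
    have ann: "\<forall>k. zsmul k y = 0 \<longrightarrow> zsmul k w' = 0"
    proof (intro allI impI)
      fix k assume "zsmul k y = 0"
      then have "p^Suc N dvd k" using ord by blast
      then have "p dvd k" using dvd_trans[of p "p^Suc N" k] by simp
      then show "zsmul k w' = 0" using pw' zsmul_kill_dvd by blast
    qed
    obtain h where h: "h \<in> endos" "\<forall>a k. pi a = zsmul k y \<longrightarrow> h a = zsmul k w'"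
      using factor_hom[OF pi(1) pi(2) ann] by blast
    have hy: "h y = w'" using h(2) pi(3) by (metis zsmul_1)
    have "pi (h y) = h (pi y)" by (rule idem_central[OF ce pi(1) pipi h(1)])
    then have "pi w' = w'" using hy pi(3) by simp
    moreover have "pi w' = 0" unfolding w'_def using endos_diff[OF pi(1)] pipi by simp
    ultimately have "w' = 0" by simp
    then have "w = pi w" unfolding w'_def by simp
    then show ?thesis using pi(2) by metis
  qed
  have inS: "\<exists>c. w = zsmul c s" if w: "zsmul p w = 0" for w
  proof -
    obtain a where a: "w = zsmul a y" using inY[OF w] by blast
    have "zsmul (p * a) y = 0" using w a by (simp add: zsmul_mult)
    then have "p^Suc N dvd p * a" using ord by blast
    then have "p^N dvd a" using prime_gt_1_int[OF p] by (simp add: power_Suc)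
    then obtain a' where "a = p^N * a'" by (rule dvdE)
    then have "w = zsmul a' s" using a y by (simp add: zsmul_mult mult.commute[of "p^N"])
    then show ?thesis by blast
  qed
  obtain a where a: "u = zsmul a s" using inS[OF u(1)] by blast
  obtain b where b: "z = zsmul b s" using inS[OF z] by blast
  show ?thesis by (rule H2[OF p s(1) a u(2) b])
qed

lemma Cp_case2:
  fixes A :: "'a::ab_group_add itself" and p :: int and u z :: 'a
  assumes ce: "centrally_essential (End_ring A)" and p: "prime p"
    and inf: "\<And>(s::'a) j. zsmul p s = 0 \<Longrightarrow> s \<noteq> 0 \<Longrightarrow> \<exists>a. s = zsmul (p^j) a"
    and u: "zsmul p u = 0" "u \<noteq> 0" and z: "zsmul p z = 0" "z \<noteq> 0"
  shows "\<exists>k. z = zsmul k u"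
proof -
  have divp: "\<forall>w::'a. zsmul (p^j) w = 0 \<longrightarrow> (\<exists>b. w = zsmul p b)" for j
  proof (induction j)
    case 0
    then show ?case by (auto intro!: exI[of _ 0])
  next
    case (Suc j)
    show ?case
    proof (intro allI impI)
      fix w assume w: "zsmul (p^Suc j) w = (0::'a)"
      define s where "s = zsmul (p^j) w"
      have ps: "zsmul p s = 0" using w unfolding s_def by (simp add: zsmul_mult[symmetric] mult.commute)
      show "\<exists>b. w = zsmul p b"
      proof (cases "s = 0")
        case True then show ?thesis using Suc.IH unfolding s_def by blast
      next
        case False
        then obtain c where c: "s = zsmul (p^Suc j) c" using inf[OF ps] by blast
        have "zsmul (p^j) (w - zsmul p c) = 0"
          using c unfolding s_def by (simp add: zsmul_minus zsmul_mult[symmetric] mult.commute)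
        then obtain b' where "w - zsmul p c = zsmul p b'" using Suc.IH by blast
        then have "w = zsmul p (b' + c)" by (simp add: zsmul_plus algebra_simps)
        then show ?thesis by blast
      qed
    qed
  qed
  define zs where "zs = rec_nat z (\<lambda>i x. SOME b. x = zsmul p b)"
  have zs0: "zs 0 = z" unfolding zs_def by simp
  have zsS: "zs (Suc i) = (SOME b. zs i = zsmul p b)" for i unfolding zs_def by simp
  have hlp: "zs i = zsmul p (zs (Suc i))" if "zsmul (p^Suc i) (zs i) = 0" for i
  proof -
    have "\<exists>b. zs i = zsmul p b" using divp that by blast
    then show ?thesis unfolding zsS by (rule someI_ex)
  qed
  have inv: "zsmul (p^Suc i) (zs i) = 0 \<and> zs i = zsmul p (zs (Suc i))" for i
  proof (induction i)
    case 0
    have "zsmul (p^Suc 0) (zs 0) = 0" using z zs0 by simp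
    then show ?case using hlp by blast
  next
    case (Suc i)
    have "zsmul (p^Suc (Suc i)) (zs (Suc i)) = zsmul (p^Suc i) (zsmul p (zs (Suc i)))"
      by (simp add: zsmul_mult[symmetric] mult.commute)
    also have "\<dots> = 0" using Suc.IH by metis
    finally show ?case using hlp by blast
  qed
  have ordi: "zsmul (p^Suc i) (zs i) = 0" for i using inv by blast
  have stepi: "zs i = zsmul p (zs (Suc i))" for i using inv by blast
  have bk: "zs i = zsmul (p^j) (zs (i + j))" for i j
  proof (induction j)
    case 0 then show ?case by simp
  next
    case (Suc j)
    have "zs i = zsmul (p^j) (zsmul p (zs (Suc (i + j))))" using Suc.IH stepi by metis
    also have "\<dots> = zsmul (p^Suc j) (zs (i + Suc j))" by (simp add: zsmul_mult[symmetric] mult.commute)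
    finally show ?case .
  qed
  have top: "zsmul (p^i) (zs i) = z" for i using bk[of 0 i] zs0 by simp
  define D2 where "D2 = {w. \<exists>k i. w = zsmul k (zs i)}"
  have D2I: "zsmul k (zs i) \<in> D2" for k i unfolding D2_def by blast
  have S: "subgroup_add D2" unfolding subgroup_add_def
  proof (intro conjI ballI)
    show "0 \<in> D2" using D2I[of 0 0] by simp
  next
    fix a b assume "a \<in> D2" "b \<in> D2"
    then obtain k i l j where ab: "a = zsmul k (zs i)" "b = zsmul l (zs j)" unfolding D2_def by blast
    have "a = zsmul (k * p^j) (zs (i + j))" using ab bk[of i j] by (simp add: zsmul_mult)
    moreover have "b = zsmul (l * p^i) (zs (i + j))" using ab bk[of j i] by (simp add: zsmul_mult add.commute)
    ultimately have "a + b = zsmul (k * p^j + l * p^i) (zs (i + j))" by (simp add: zsmul_add)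
    then show "a + b \<in> D2" using D2I by simp
  next
    fix a assume "a \<in> D2"
    then obtain k i where "a = zsmul k (zs i)" unfolding D2_def by blast
    then have "- a = zsmul (-k) (zs i)" by (simp add: zsmul_uminus)
    then show "- a \<in> D2" using D2I by simp
  qed
  have D: "divisible_subgroup D2"
  proof (rule div_by_primes[OF S])
    fix q :: nat and x assume q: "prime q" and x: "x \<in> D2"
    then obtain k i where xk: "x = zsmul k (zs i)" unfolding D2_def by blast
    show "\<exists>e\<in>D2. zsmul (int q) e = x"
    proof (cases "int q = p")
      case True
      have "zsmul (int q) (zsmul k (zs (Suc i))) = x" using True xk stepi[of i] by (simp add: zsmul_commute)
      then show ?thesis using D2I by blast
    next
      case False
      have "prime (int q)" using q by simp
      then have "coprime (int q) p" using primes_coprime[OF _ p False] by blast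
      then have "coprime (int q) (p^Suc i)" by simp
      then obtain al be where ab: "al * int q + be * p^Suc i = 1"
        using bezout_int[of "int q" "p^Suc i"] by (metis coprime_iff_gcd_eq_1)
      have "zsmul (int q) (zsmul (al * k) (zs i)) = zsmul k (zsmul (al * int q) (zs i))"
        by (simp add: zsmul_mult[symmetric] algebra_simps)
      also have "al * int q = 1 - be * p^Suc i" using ab by simp
      also have "zsmul (1 - be * p^Suc i) (zs i) = zs i" using ordi[of i] by (simp add: zsmul_diff zsmul_mult)
      finally show ?thesis using xk D2I by blast
    qed
  qed
  have killp: "\<exists>c. w = zsmul c z" if w: "w \<in> D2" "zsmul p w = 0" for w
  proof -
    obtain k i where wk: "w = zsmul k (zs i)" using w(1) unfolding D2_def by blast
    have "zsmul (p * k) (zs i) = 0" using w wk by (simp add: zsmul_mult)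
    moreover have "zsmul (p^i) (zs i) \<noteq> 0" using top z(2) by simp
    ultimately have "p^Suc i dvd p * k" using ord_pp[OF p ordi] by blast
    then have "p^i dvd k" using prime_gt_1_int[OF p] by (simp add: power_Suc)
    then obtain k' where "k = p^i * k'" by (rule dvdE)
    then have "w = zsmul k' z" using wk top[of i] by (simp add: zsmul_mult mult.commute[of "p^i"])
    then show ?thesis by blast
  qed
  obtain r where r: "r \<in> endos" "\<forall>a. r a \<in> D2" "\<forall>d\<in>D2. r d = d" using div_retract[OF D] by blast
  define y where "y = u - r u"
  have ry: "r y = 0" unfolding y_def using endos_diff[OF r(1)] r by simp
  show ?thesis
  proof (cases "y = 0")
    case True
    then have "u \<in> D2" using r(2) unfolding y_def by (metis eq_iff_diff_eq_0)
    then obtain c where "u = zsmul c z" using killp u(1) by blast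
    then show ?thesis using H2[OF p z(1) _ u(2), of c z 1] by simp
  next
    case False
    have py: "zsmul p y = 0" unfolding y_def using u(1) endos_zsmul[OF r(1), of p u] endos_0[OF r(1)]
      by (simp add: zsmul_minus)
    have ann: "\<forall>k. zsmul k y = 0 \<longrightarrow> zsmul k z = 0"
      using prime_ord[OF p py False] prime_ord[OF p z(1) z(2)] by blast
    have "z \<in> D2" using D2I[of 1 0] zs0 by simp
    then have "z = 0" using lemma_div[OF ce D r ry _ ann] by blast
    then show ?thesis using z(2) by simp
  qed
qed

lemma Cp:
  fixes A :: "'a::ab_group_add itself" and p :: int and u z :: 'a
  assumes ce: "centrally_essential (End_ring A)" and p: "prime p"
    and u: "zsmul p u = 0" "u \<noteq> 0" and z: "zsmul p z = 0"
  shows "\<exists>k. z = zsmul k u"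
proof (cases "z = 0")
  case True then show ?thesis by (auto intro!: exI[of _ 0])
next
  case False
  show ?thesis
  proof (cases "\<exists>(s::'a) j. zsmul p s = 0 \<and> s \<noteq> 0 \<and> \<not> (\<exists>a. s = zsmul (p^j) a)")
    case True
    then obtain s :: 'a and j where "zsmul p s = 0" "s \<noteq> 0" "\<not> (\<exists>a. s = zsmul (p^j) a)" by blast
    then show ?thesis using Cp_case1[OF ce p _ _ _ u z] by blast
  next
    case c2: False
    show ?thesis by (rule Cp_case2[OF ce p _ u z False]) (use c2 in blast)
  qed
qed

lemma cyc:
  fixes A :: "'a::ab_group_add itself" and v w :: 'a
  assumes ce: "centrally_essential (End_ring A)"
  shows "n > 0 \<Longrightarrow> (\<forall>k. zsmul k v = 0 \<longleftrightarrow> int n dvd k) \<Longrightarrow> zsmul (int n) w = 0 \<Longrightarrow> \<exists>k. w = zsmul k v"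
proof (induction n arbitrary: v w rule: less_induct)
  case (less n)
  show ?case
  proof (cases "n = 1")
    case True
    then have "w = 0" using less.prems(3) by simp
    then show ?thesis by (auto intro!: exI[of _ 0])
  next
    case False
    then obtain q where q: "prime q" "q dvd n" using prime_factor_nat by blast
    from q(2) obtain n' where n': "n = q * n'" by (rule dvdE)
    have q1: "q > 1" using prime_gt_1_nat[OF q(1)] .
    have n'pos: "n' > 0" "n' < n" using n' less.prems(1) q1 by auto
    define v2 where "v2 = zsmul (int q) v"
    define w2 where "w2 = zsmul (int q) w"
    have ord2: "\<forall>k. zsmul k v2 = 0 \<longleftrightarrow> int n' dvd k"
    proof
      fix k
      have "zsmul k v2 = zsmul (int q * k) v" unfolding v2_def by (simp add: zsmul_mult mult.commute)
      then have "zsmul k v2 = 0 \<longleftrightarrow> int q * int n' dvd int q * k" using less.prems(2) n' by simp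
      also have "\<dots> \<longleftrightarrow> int n' dvd k" using q1 by simp
      finally show "zsmul k v2 = 0 \<longleftrightarrow> int n' dvd k" .
    qed
    have "zsmul (int n') w2 = zsmul (int n) w" unfolding w2_def n' by (simp add: zsmul_mult mult.commute)
    then have w2: "zsmul (int n') w2 = 0" using less.prems(3) by simp
    obtain k where k: "w2 = zsmul k v2" using less.IH[OF n'pos(2) n'pos(1) ord2 w2] by blast
    define z where "z = w - zsmul k v"
    have pz: "zsmul (int q) z = 0" unfolding z_def using k unfolding w2_def v2_def
      by (simp add: zsmul_minus zsmul_commute)
    define u where "u = zsmul (int n') v"
    have pu: "zsmul (int q) u = 0" unfolding u_def using less.prems(2) n'
      by (simp add: zsmul_mult[symmetric])
    have u0: "u \<noteq> 0"
    proof
      assume "u = 0"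
      then have "int n dvd int n'" using less.prems(2) unfolding u_def by blast
      then have "n dvd n'" by simp
      then show False using n'pos by (simp add: nat_dvd_not_less)
    qed
    have "prime (int q)" using q(1) by simp
    from Cp[OF ce this pu u0 pz] obtain l where "z = zsmul l u" by blast
    then have "w = zsmul (k + l * int n') v" unfolding z_def u_def by (simp add: zsmul_add zsmul_mult algebra_simps)
    then show ?thesis by blast
  qed
qed

definition tor :: "'a::ab_group_add \<Rightarrow> bool" where
  "tor x \<longleftrightarrow> (\<exists>n>0. zsmul n x = 0)"

lemma torI: "zsmul k x = 0 \<Longrightarrow> k \<noteq> 0 \<Longrightarrow> tor x"
proof -
  assume a: "zsmul k x = 0" "k \<noteq> 0"
  show "tor x"
  proof (cases "k > 0")
    case True then show ?thesis using a unfolding tor_def by blast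
  next
    case False
    then have "- k > 0" using a by simp
    moreover have "zsmul (-k) x = 0" using a by (simp add: zsmul_uminus)
    ultimately show ?thesis unfolding tor_def by blast
  qed
qed

lemma torsion_elem:
  fixes A :: "'a::ab_group_add itself" and v :: 'a
  assumes ce: "centrally_essential (End_ring A)" and t: "tor v" and f: "f \<in> endos"
  shows "\<exists>k. f v = zsmul k v"
proof -
  obtain n where n: "n > 0" "zsmul n v = 0" using t unfolding tor_def by blast
  have "0 \<in> {k. zsmul k v = 0}" by simp
  moreover have "a*k + b*l \<in> {k. zsmul k v = 0}" if "k \<in> {k. zsmul k v = 0}" "l \<in> {k. zsmul k v = 0}"
    for k l a b using that by (simp add: zsmul_add zsmul_mult)
  ultimately obtain d where d: "d \<ge> 0" "\<forall>k. k \<in> {k. zsmul k v = 0} \<longleftrightarrow> d dvd k"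
    using int_ideal[of "{k. zsmul k v = 0}"] by blast
  then have dd: "\<forall>k. zsmul k v = 0 \<longleftrightarrow> d dvd k" by simp
  have "d dvd n" using dd n by blast
  then have "d \<noteq> 0" using n by auto
  then have dpos: "nat d > 0" "int (nat d) = d" using d by auto
  have "zsmul d v = 0" using dd by simp
  then have "zsmul d (f v) = 0" using endos_zsmul[OF f, of d v] endos_0[OF f] by simp
  then show ?thesis using cyc[OF ce dpos(1)] dd dpos(2) by simp
qed

lemma torsion_comm:
  fixes A :: "'a::ab_group_add itself" and v :: 'a
  assumes ce: "centrally_essential (End_ring A)" and t: "tor v" and f: "f \<in> endos" and g: "g \<in> endos"
  shows "f (g v) = g (f v)"
proof -
  obtain k where k: "f v = zsmul k v" using torsion_elem[OF ce t f] by blast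
  obtain l where l: "g v = zsmul l v" using torsion_elem[OF ce t g] by blast
  have "f (g v) = zsmul l (zsmul k v)" using k l endos_zsmul[OF f] by simp
  moreover have "g (f v) = zsmul k (zsmul l v)" using k l endos_zsmul[OF g] by simp
  ultimately show ?thesis by (simp add: zsmul_commute)
qed

lemma not_tor: "\<not> tor x \<Longrightarrow> zsmul k x = 0 \<Longrightarrow> k = 0"
  using torI by blast

lemma retract_idem: "\<forall>a. r a \<in> D \<Longrightarrow> \<forall>d\<in>D. r d = d \<Longrightarrow> r (r v) = r v"
  by blast

lemma D_torfree:
  fixes A :: "'a::ab_group_add itself" and v c :: 'a and D :: "'a set"
  assumes ce: "centrally_essential (End_ring A)" and D: "divisible_subgroup D"
    and v: "\<not> tor v" and c: "c \<in> D" "tor c"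
  shows "c = 0"
proof -
  have S: "subgroup_add D" using D by (rule divisible_subgroupD)
  define Dt where "Dt = {c \<in> D. tor c}"
  have St: "subgroup_add Dt" unfolding subgroup_add_def
  proof (intro conjI ballI)
    show "0 \<in> Dt" unfolding Dt_def tor_def using S unfolding subgroup_add_def
      by (auto intro!: exI[of _ 1])
  next
    fix a b assume "a \<in> Dt" "b \<in> Dt"
    then obtain n m where nm: "n > 0" "zsmul n a = 0" "m > 0" "zsmul m b = 0" "a \<in> D" "b \<in> D"
      unfolding Dt_def tor_def by blast
    have "zsmul (n * m) (a + b) = 0" using nm
      by (simp add: zsmul_plus zsmul_mult) (metis zsmul_commute zsmul_zero)
    moreover have "n * m > 0" using nm by simp
    moreover have "a + b \<in> D" using S nm unfolding subgroup_add_def by blast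
    ultimately show "a + b \<in> Dt" unfolding Dt_def tor_def by blast
  next
    fix a assume "a \<in> Dt"
    then obtain n where n: "n > 0" "zsmul n a = 0" "a \<in> D" unfolding Dt_def tor_def by blast
    then have "zsmul n (-a) = 0" by (simp add: zsmul_neg)
    moreover have "-a \<in> D" using S n unfolding subgroup_add_def by blast
    ultimately show "- a \<in> Dt" using n unfolding Dt_def tor_def by blast
  qed
  have Dt: "divisible_subgroup Dt" unfolding divisible_subgroup_def
  proof (intro conjI St ballI allI impI)
    fix d :: 'a and n :: nat assume d: "d \<in> Dt" and n: "n > 0"
    then obtain e where e: "e \<in> D" "nsmul n e = d" using D unfolding Dt_def divisible_subgroup_def by blast
    obtain m where m: "m > 0" "zsmul m d = 0" using d unfolding Dt_def tor_def by blast
    have "zsmul (m * int n) e = 0" using m e by (simp add: zsmul_mult zsmul_nat)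
    moreover have "m * int n > 0" using m n by simp
    ultimately have "e \<in> Dt" using e unfolding Dt_def tor_def by blast
    then show "\<exists>e\<in>Dt. nsmul n e = d" using e by blast
  qed
  obtain r where r: "r \<in> endos" "\<forall>a. r a \<in> Dt" "\<forall>d\<in>Dt. r d = d" using div_retract[OF Dt] by blast
  define y where "y = v - r v"
  have ry: "r y = 0" unfolding y_def using endos_diff[OF r(1)] r by simp
  have ann: "\<forall>k. zsmul k y = 0 \<longrightarrow> zsmul k c = 0"
  proof (intro allI impI)
    fix k assume k: "zsmul k y = 0"
    obtain m where m: "m > 0" "zsmul m (r v) = 0" using r(2) unfolding Dt_def tor_def by blast
    have "zsmul k v = zsmul k (r v)" using k unfolding y_def by (simp add: zsmul_minus)
    then have "zsmul (m * k) v = 0" using m by (simp add: zsmul_mult) (metis zsmul_commute zsmul_zero)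
    then have "m * k = 0" using not_tor[OF v] by blast
    then have "k = 0" using m by simp
    then show "zsmul k c = 0" by simp
  qed
  have "c \<in> Dt" using c unfolding Dt_def by blast
  then show ?thesis using lemma_div[OF ce Dt r ry _ ann] by blast
qed

lemma nonreduced_comm:
  fixes A :: "'a::ab_group_add itself" and v d0 :: 'a and D :: "'a set" and f g :: "'a \<Rightarrow> 'a"
  assumes ce: "centrally_essential (End_ring A)" and D: "divisible_subgroup D" and d0: "d0 \<in> D" "d0 \<noteq> 0"
    and v: "\<not> tor v" and f: "f \<in> endos" and g: "g \<in> endos"
  shows "f (g v) = g (f v)"
proof -
  have S: "subgroup_add D" using D by (rule divisible_subgroupD)
  have tf: "c = 0" if "c \<in> D" "tor c" for c using D_torfree[OF ce D v that] .
  obtain r where r: "r \<in> endos" "\<forall>a. r a \<in> D" "\<forall>d\<in>D. r d = d" using div_retract[OF D] by blast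
  have rr: "r (r x) = r x" for x using r by blast
  have pres: "h x \<in> D" if "h \<in> endos" "x \<in> D" for h x
  proof -
    have "h x = h (r x)" using r that by simp
    also have "\<dots> = r (h x)" using idem_central[OF ce r(1) rr that(1)] by simp
    finally show ?thesis using r(2) by metis
  qed
  define k0 where "k0 = v - r v"
  have rk0: "r k0 = 0" unfolding k0_def using endos_diff[OF r(1)] rr by simp
  have tk0: "tor k0"
  proof (rule ccontr)
    assume nt: "\<not> tor k0"
    have "\<forall>k. zsmul k k0 = 0 \<longrightarrow> zsmul k d0 = 0" using not_tor[OF nt] by (metis zsmul_0)
    then have "d0 = 0" using lemma_div[OF ce D r rk0 d0(1)] by blast
    then show False using d0 by simp
  qed
  have c1: "f (g k0) = g (f k0)" by (rule torsion_comm[OF ce tk0 f g])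
  define v' where "v' = r v"
  have v'D: "v' \<in> D" unfolding v'_def using r by blast
  have vsplit: "v = v' + k0" unfolding v'_def k0_def by simp
  have c2: "f (g v') = g (f v')"
  proof (cases "v' = 0")
    case True then show ?thesis using endos_0[OF f] endos_0[OF g] by simp
  next
    case False
    have ntv': "\<not> tor v'" using tf v'D False by blast
    have rank1: "\<exists>n m. n \<noteq> 0 \<and> zsmul n w = zsmul m v'" if w: "w \<in> D" for w
    proof (rule ccontr)
      assume nw: "\<not> (\<exists>n m. n \<noteq> 0 \<and> zsmul n w = zsmul m v')"
      define D1 where "D1 = {x \<in> D. \<exists>n m. n \<noteq> 0 \<and> zsmul n x = zsmul m v'}"
      have S1: "subgroup_add D1" unfolding subgroup_add_def
      proof (intro conjI ballI)
        have "0 \<in> D" using S unfolding subgroup_add_def by blast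
        moreover have "zsmul 1 (0::'a) = zsmul 0 v'" by simp
        ultimately show "0 \<in> D1" unfolding D1_def by (metis (mono_tags, lifting) mem_Collect_eq one_neq_zero)
      next
        fix a b assume "a \<in> D1" "b \<in> D1"
        then obtain n1 m1 n2 m2 where nm: "n1 \<noteq> 0" "zsmul n1 a = zsmul m1 v'" "n2 \<noteq> 0"
          "zsmul n2 b = zsmul m2 v'" "a \<in> D" "b \<in> D" unfolding D1_def by blast
        have "zsmul (n1 * n2) (a + b) = zsmul n2 (zsmul n1 a) + zsmul n1 (zsmul n2 b)"
          by (simp add: zsmul_plus zsmul_mult zsmul_commute)
        also have "\<dots> = zsmul (n2 * m1 + n1 * m2) v'" using nm by (simp add: zsmul_add zsmul_mult)
        finally have "zsmul (n1 * n2) (a + b) = zsmul (n2 * m1 + n1 * m2) v'" .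
        moreover have "n1 * n2 \<noteq> 0" using nm by simp
        moreover have "a + b \<in> D" using S nm unfolding subgroup_add_def by blast
        ultimately show "a + b \<in> D1" unfolding D1_def by blast
      next
        fix a assume "a \<in> D1"
        then obtain n m where nm: "n \<noteq> 0" "zsmul n a = zsmul m v'" "a \<in> D" unfolding D1_def by blast
        then have "zsmul n (-a) = zsmul (-m) v'" by (simp add: zsmul_neg zsmul_uminus)
        moreover have "-a \<in> D" using S nm unfolding subgroup_add_def by blast
        ultimately show "- a \<in> D1" using nm unfolding D1_def by blast
      qed
      have D1: "divisible_subgroup D1" unfolding divisible_subgroup_def
      proof (intro conjI S1 ballI allI impI)
        fix d :: 'a and n :: nat assume d: "d \<in> D1" and n: "n > 0"
        then obtain e where e: "e \<in> D" "nsmul n e = d" using D unfolding D1_def divisible_subgroup_def by blast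
        obtain n1 m1 where nm: "n1 \<noteq> 0" "zsmul n1 d = zsmul m1 v'" using d unfolding D1_def by blast
        have "zsmul (n1 * int n) e = zsmul m1 v'" using nm e by (simp add: zsmul_mult zsmul_nat)
        moreover have "n1 * int n \<noteq> 0" using nm n by simp
        ultimately have "e \<in> D1" using e unfolding D1_def by blast
        then show "\<exists>e\<in>D1. nsmul n e = d" using e by blast
      qed
      obtain r1 where r1: "r1 \<in> endos" "\<forall>a. r1 a \<in> D1" "\<forall>d\<in>D1. r1 d = d"
        using div_retract[OF D1] by blast
      define y where "y = w - r1 w"
      have ry: "r1 y = 0" unfolding y_def using endos_diff[OF r1(1)] r1 by simp
      have "r1 w \<in> D" using r1(2) unfolding D1_def by blast
      then have yD: "y \<in> D" unfolding y_def using subgroup_diff[OF S w] by blast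
      have y0: "y \<noteq> 0"
      proof
        assume "y = 0"
        then have "w \<in> D1" using r1(2) unfolding y_def by (metis eq_iff_diff_eq_0)
        then show False using nw unfolding D1_def by blast
      qed
      have nty: "\<not> tor y" using tf yD y0 by blast
      have ann: "\<forall>k. zsmul k y = 0 \<longrightarrow> zsmul k v' = 0" using not_tor[OF nty] by (metis zsmul_0)
      have "v' \<in> D1" unfolding D1_def using v'D by (auto intro!: exI[of _ 1])
      then have "v' = 0" using lemma_div[OF ce D1 r1 ry _ ann] by blast
      then show False using False by simp
    qed
    have fD: "f v' \<in> D" "g v' \<in> D" using pres f g v'D by auto
    obtain n1 m1 where n1: "n1 \<noteq> 0" "zsmul n1 (f v') = zsmul m1 v'" using rank1[OF fD(1)] by blast
    obtain n2 m2 where n2: "n2 \<noteq> 0" "zsmul n2 (g v') = zsmul m2 v'" using rank1[OF fD(2)] by blast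
    have "zsmul (n1 * n2) (f (g v')) = zsmul n1 (f (zsmul n2 (g v')))"
      by (simp add: zsmul_mult endos_zsmul[OF f])
    also have "\<dots> = zsmul m2 (zsmul n1 (f v'))" using n2 by (simp add: endos_zsmul[OF f] zsmul_commute)
    also have "\<dots> = zsmul m2 (zsmul m1 v')" using n1 by simp
    finally have e1: "zsmul (n1 * n2) (f (g v')) = zsmul m2 (zsmul m1 v')" .
    have "zsmul (n1 * n2) (g (f v')) = zsmul n2 (g (zsmul n1 (f v')))"
      by (simp add: zsmul_mult endos_zsmul[OF g] zsmul_commute)
    also have "\<dots> = zsmul m1 (zsmul n2 (g v'))" using n1 by (simp add: endos_zsmul[OF g] zsmul_commute)
    also have "\<dots> = zsmul m1 (zsmul m2 v')" using n2 by simp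
    finally have e2: "zsmul (n1 * n2) (g (f v')) = zsmul m1 (zsmul m2 v')" .
    have "zsmul (n1 * n2) (f (g v') - g (f v')) = 0" using e1 e2 by (simp add: zsmul_minus zsmul_commute)
    moreover have "n1 * n2 \<noteq> 0" using n1 n2 by simp
    ultimately have "tor (f (g v') - g (f v'))" by (rule torI)
    moreover have "f (g v') - g (f v') \<in> D" using pres f g fD subgroup_diff[OF S] by blast
    ultimately have "f (g v') - g (f v') = 0" using tf by blast
    then show ?thesis by simp
  qed
  show ?thesis using vsplit c1 c2 endos_add[OF f] endos_add[OF g] by simp
qed

theorem mainTheorem1:
  fixes A :: "'a::ab_group_add itself"
  assumes "\<exists>x::'a. x \<noteq> 0"
    and "torsion_group A \<or> \<not> reduced_group A"
    and "centrally_essential (End_ring A)"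
  shows "ring_commutative (End_ring A)"
proof -
  note ce = assms(3)
  have "f (g v) = g (f v)" if f: "f \<in> endos" and g: "g \<in> endos" for f g and v :: 'a
  proof (cases "tor v")
    case True
    then show ?thesis by (rule torsion_comm[OF ce _ f g])
  next
    case False
    have "\<not> torsion_group A"
    proof
      assume "torsion_group A"
      then obtain n where "n > 0" "nsmul n v = 0" unfolding torsion_group_def by blast
      then have "zsmul (int n) v = 0" "int n \<noteq> 0" by (simp_all add: zsmul_nat)
      then show False using False torI by blast
    qed
    then have "\<not> reduced_group A" using assms(2) by blast
    then obtain D :: "'a set" where D: "divisible_subgroup D" "D \<noteq> {0}" unfolding reduced_group_def by blast
    have "0 \<in> D" using D(1) unfolding divisible_subgroup_def subgroup_add_def by blast
    then obtain d0 where "d0 \<in> D" "d0 \<noteq> 0" using D(2) by blast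
    then show ?thesis using nonreduced_comm[OF ce D(1) _ _ False f g] by blast
  qed
  then show ?thesis unfolding ring_commutative_def End_simps by (auto simp: fun_eq_iff)
qed

end
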